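(* Let $L$ and $N$ be positive integers with $N\le L$, and let $U$ be real with $L > \frac{8}{U}$. Consider the Lieb-Wu equations with one down spin in the unknowns $k_1,\dots,k_N$ and $\Lambda$: $$e^{i k_j L} = \frac{\Lambda - \sin k_j - iU/4}{\Lambda - \sin k_j + iU/4},\quad j=1,\dots,N,\qquad \prod_{j=1}^N \frac{\Lambda - \sin k_j - iU/4}{\Lambda - \sin k_j + iU/4} = 1.$$ Then there are precisely $\binom{L}{N}(N-1)$ solutions with all $k_j$ real. More precisely, to every choice of $N$ mutually distinct intervals $\mathcal{I}_j = [(\ell_j-1)\frac{2\pi}{L}, \ell_j\frac{2\pi}{L}]$, $j=1,\dots,N$, with $\ell_j\in\{1,\dots,L\}$ and $\ell_j\ne\ell_k$ for $j\neq k$, there correspond exactly $N-1$ solutions with $k_j\in\mathcal{I}_j$ for all $j$, and these solutions are characterized by $N-1$ different values of $\Lambda$.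
   Context: Solutions are counted modulo permutations of the $k_j$, with the $k_j$ required to be mutually distinct and taken in $[0,2\pi)$ (they matter only modulo $2\pi$), and with $\Lambda$ a finite real number ($\Lambda=\pm\infty$ excluded). *)

theory Defs
  imports Complex_Main
begin

definition LW_factor :: "real \<Rightarrow> real \<Rightarrow> real \<Rightarrow> complex" where
  "LW_factor U Lam k =
     (complex_of_real (Lam - sin k) - \<i> * complex_of_real (U / 4)) /
     (complex_of_real (Lam - sin k) + \<i> * complex_of_real (U / 4))"

text \<open>Real solutions, counted modulo permutations of the k_j: a solution is the
  set K of the N mutually distinct momenta (taken in [0, 2pi)) together with a
  finite real Lambda.\<close>
definition LW_solutions :: "nat \<Rightarrow> nat \<Rightarrow> real \<Rightarrow> (real set \<times> real) set" where
  "LW_solutions L N U =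
     {(K, Lam). finite K \<and> card K = N \<and> K \<subseteq> {0..<2*pi} \<and>
        (\<forall>k\<in>K. exp (\<i> * complex_of_real (k * real L)) = LW_factor U Lam k) \<and>
        (\<Prod>k\<in>K. LW_factor U Lam k) = 1}"

definition LW_interval :: "nat \<Rightarrow> nat \<Rightarrow> real set" where
  "LW_interval L l = {(real l - 1) * (2*pi / real L) .. real l * (2*pi / real L)}"

definition LW_solutions_in :: "nat \<Rightarrow> nat \<Rightarrow> real \<Rightarrow> nat set \<Rightarrow> (real set \<times> real) set" where
  "LW_solutions_in L N U S =
     {(K, Lam) \<in> LW_solutions L N U.
        \<exists>f. bij_betw f K S \<and> (\<forall>k\<in>K. k \<in> LW_interval L (f k))}"

end

theory Submission
  imports Defs "HOL-Analysis.Complex_Transcendental"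
begin


lemma cos_2arctan: "cos (2 * arctan t) = (1 - t^2) / (1 + t^2)"
proof -
  have p: "0 < 1 + t^2" by (simp add: add_pos_nonneg)
  have "cos (2 * arctan t) = (cos (arctan t))^2 - (sin (arctan t))^2" by (simp add: cos_double)
  also have "\<dots> = (1 - t^2) / (1 + t^2)" using p
    by (simp add: cos_arctan sin_arctan power_divide diff_divide_distrib)
  finally show ?thesis .
qed

lemma sin_2arctan: "sin (2 * arctan t) = 2 * t / (1 + t^2)"
proof -
  have p: "0 < 1 + t^2" by (simp add: add_pos_nonneg)
  have "sin (2 * arctan t) = 2 * sin (arctan t) * cos (arctan t)" by (simp add: sin_double)
  also have "\<dots> = 2 * t / (1 + t^2)" using p
    by (simp add: cos_arctan sin_arctan)
  finally show ?thesis .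
qed

lemma factor_eq:
  fixes a c :: real assumes c: "c > 0"
  shows "(complex_of_real a - \<i> * complex_of_real c) / (complex_of_real a + \<i> * complex_of_real c)
        = - exp (\<i> * complex_of_real (2 * arctan (a / c)))"
proof -
  define t where "t = a / c"
  have a: "a = t * c" using c by (simp add: t_def)
  have nz: "complex_of_real a + \<i> * complex_of_real c \<noteq> 0"
    using c by (auto simp: complex_eq_iff)
  have p: "0 < 1 + t^2" by (simp add: add_pos_nonneg)
  have e: "exp (\<i> * complex_of_real (2 * arctan t)) = Complex ((1 - t^2) / (1 + t^2)) (2 * t / (1 + t^2))"
    by (simp add: complex_eq_iff Re_exp Im_exp cos_2arctan sin_2arctan)
  have q: "1 + t^2 \<noteq> 0" using p by simp
  have r1: "t * c = 2 * t * c / (1 + t\<^sup>2) - (1 - t\<^sup>2) * (t * c) / (1 + t\<^sup>2)"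
  proof -
    have "2 * t * c / (1 + t\<^sup>2) - (1 - t\<^sup>2) * (t * c) / (1 + t\<^sup>2) = (2 * t * c - (1 - t\<^sup>2) * (t * c)) / (1 + t\<^sup>2)"
      by (simp add: diff_divide_distrib)
    also have "2 * t * c - (1 - t\<^sup>2) * (t * c) = (t*c) * (1 + t\<^sup>2)" by (simp add: algebra_simps power2_eq_square)
    finally show ?thesis using q by simp
  qed
  have r2: "- c = - ((1 - t\<^sup>2) * c / (1 + t\<^sup>2)) - 2 * t * (t * c) / (1 + t\<^sup>2)"
  proof -
    have "- ((1 - t\<^sup>2) * c / (1 + t\<^sup>2)) - 2 * t * (t * c) / (1 + t\<^sup>2) = (- ((1 - t\<^sup>2) * c) - 2 * t * (t * c)) / (1 + t\<^sup>2)"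
      by (simp add: diff_divide_distrib)
    also have "- ((1 - t\<^sup>2) * c) - 2 * t * (t * c) = (-c) * (1 + t\<^sup>2)" by (simp add: algebra_simps power2_eq_square)
    finally show ?thesis using q by simp
  qed
  have "complex_of_real a - \<i> * complex_of_real c = - exp (\<i> * complex_of_real (2 * arctan t)) * (complex_of_real a + \<i> * complex_of_real c)"
    unfolding e a using r1 r2 by (simp add: complex_eq_iff)
  then show ?thesis using nz unfolding t_def by (simp add: divide_eq_eq)
qed

lemma neg_div_ge: "(q::real) < 0 \<Longrightarrow> D \<ge> 1 \<Longrightarrow> q / D \<ge> q"
proof -
  assume q: "q < 0" and D: "D \<ge> 1"
  have "q * D \<le> q * 1" using mult_left_mono_neg[of 1 D q] q D by linarith
  then show ?thesis using D by (simp add: le_divide_eq)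
qed

locale LWl =
  fixes L :: nat and U :: real
  assumes U: "0 < U" and LU: "real L > 8 / U"
begin

definition th :: "real \<Rightarrow> real" where "th x = 2 * arctan (x / (U/4))"
definition gg :: "real \<Rightarrow> real \<Rightarrow> real" where "gg Lam k = k * real L - th (Lam - sin k)"

lemma Lpos: "real L > 0"
  using LU U by (smt (verit) divide_pos_pos)

lemma factor: "LW_factor U Lam k = - exp (\<i> * complex_of_real (th (Lam - sin k)))"
  unfolding LW_factor_def th_def using factor_eq[of "U/4" "Lam - sin k"] U by simp

lemma eq_iff: "exp (\<i> * complex_of_real (k * real L)) = LW_factor U Lam k \<longleftrightarrow>
   (\<exists>m::int. gg Lam k = (2 * of_int m + 1) * pi)"
proof -
  have e: "- exp (\<i> * complex_of_real (th (Lam - sin k))) = exp (\<i> * complex_of_real (th (Lam - sin k) + pi))"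
    by (simp add: complex_eq_iff Re_exp Im_exp cos_periodic_pi sin_periodic_pi)
  have "exp (\<i> * complex_of_real (k * real L)) = LW_factor U Lam k \<longleftrightarrow>
     (\<exists>n::int. \<i> * complex_of_real (k * real L) = \<i> * complex_of_real (th (Lam - sin k) + pi) + (of_int (2 * n) * pi) * \<i>)"
    unfolding factor e exp_eq ..
  also have "\<dots> \<longleftrightarrow> (\<exists>n::int. k * real L = th (Lam - sin k) + pi + of_int (2 * n) * pi)"
    by (simp add: complex_eq_iff)
  also have "\<dots> \<longleftrightarrow> (\<exists>m::int. gg Lam k = (2 * of_int m + 1) * pi)"
    unfolding gg_def by (auto simp: algebra_simps)
  finally show ?thesis .
qed

lemma th_bounds: "- pi < th x" "th x < pi"
  unfolding th_def using arctan_bounded[of "x / (U/4)"] by auto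

lemma th_less: "x < y \<Longrightarrow> th x < th y"
proof -
  assume "x < y"
  then have "x / (U/4) < y / (U/4)" using U by (simp add: divide_strict_right_mono)
  then show ?thesis unfolding th_def by (simp only: arctan_less_iff mult_less_cancel_left_pos)
qed

lemma th_le: "x \<le> y \<Longrightarrow> th x \<le> th y"
  using th_less by (cases "x = y") (auto simp: le_less)

lemma gg_less_Lam: "Lam1 < Lam2 \<Longrightarrow> gg Lam2 k < gg Lam1 k"
  unfolding gg_def using th_less[of "Lam1 - sin k" "Lam2 - sin k"] by simp

lemma gg_cont: "isCont (gg Lam) k"
  unfolding gg_def th_def using U by (intro continuous_intros) auto

lemma gg_deriv: "(gg Lam has_real_derivative
   (real L + 2 * (cos k / (U/4)) / (1 + ((Lam - sin k) / (U/4))^2))) (at k)"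
  unfolding gg_def th_def
  using U by (auto intro!: derivative_eq_intros simp: field_simps)

lemma deriv_pos: "real L + 2 * (cos k / (U/4)) / (1 + ((Lam - sin k) / (U/4))^2) > 0"
proof -
  define D where "D = 1 + ((Lam - sin k) / (U/4))^2"
  have D: "D \<ge> 1" unfolding D_def by simp
  have c4: "cos k / (U/4) \<ge> - (4 / U)" using U cos_ge_minus_one[of k]
    by (simp add: field_simps)
  have "(cos k / (U/4)) / D \<ge> - (4/U)"
  proof (cases "cos k / (U/4) \<ge> 0")
    case True then show ?thesis using D U by (smt (verit) divide_nonneg_pos divide_pos_pos)
  next
    case False
    then have "(cos k / (U/4)) / D \<ge> cos k / (U/4)" using D neg_div_ge[of "cos k / (U/4)" D] by linarith
    then show ?thesis using c4 by linarith
  qed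
  then have "2 * (cos k / (U/4)) / D \<ge> - (8/U)" by simp
  then show ?thesis using LU unfolding D_def by linarith
qed

lemma gg_less_k: "k1 < k2 \<Longrightarrow> gg Lam k1 < gg Lam k2"
proof -
  assume "k1 < k2"
  then show ?thesis
  proof (rule DERIV_pos_imp_increasing)
    fix x show "\<exists>y. DERIV (gg Lam) x :> y \<and> y > 0" using gg_deriv[of Lam x] deriv_pos[of x Lam] by blast
  qed
qed


lemma mulL: "x * (2*pi/real L) * real L = x * 2 * pi"
  using Lpos by simp

lemma gg_left: "gg Lam ((real l - 1) * (2*pi/real L)) < (2 * real l - 1) * pi"
  unfolding gg_def mulL using th_bounds(1)[of "Lam - sin ((real l - 1) * (2*pi/real L))"]
  by (simp add: algebra_simps)

lemma gg_right: "gg Lam (real l * (2*pi/real L)) > (2 * real l - 1) * pi"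
  unfolding gg_def mulL using th_bounds(2)[of "Lam - sin (real l * (2*pi/real L))"]
  by (simp add: algebra_simps)

lemma gg_le_k: "k1 \<le> k2 \<Longrightarrow> gg Lam k1 \<le> gg Lam k2"
proof -
  assume a: "k1 \<le> k2"
  show ?thesis
  proof (cases "k1 < k2")
    case True then show ?thesis using gg_less_k[of k1 k2 Lam] by linarith
  next
    case False then have "k1 = k2" using a by linarith
    then show ?thesis by simp
  qed
qed

lemma kk_ex1: "\<exists>!k. k \<in> LW_interval L l \<and> gg Lam k = (2 * real l - 1) * pi"
proof (rule ex_ex1I)
  have ab: "(real l - 1) * (2*pi/real L) \<le> real l * (2*pi/real L)"
    using Lpos by (simp add: divide_right_mono mult_right_mono)
  have "\<exists>x. (real l - 1) * (2*pi/real L) \<le> x \<and> x \<le> real l * (2*pi/real L) \<and> gg Lam x = (2 * real l - 1) * pi"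
    by (rule IVT') (use gg_left[where Lam=Lam and l=l] gg_right[where Lam=Lam and l=l] ab in \<open>auto intro: continuous_at_imp_continuous_on gg_cont\<close>)
  then show "\<exists>k. k \<in> LW_interval L l \<and> gg Lam k = (2 * real l - 1) * pi"
    unfolding LW_interval_def by auto
next
  fix x y assume "x \<in> LW_interval L l \<and> gg Lam x = (2 * real l - 1) * pi"
    "y \<in> LW_interval L l \<and> gg Lam y = (2 * real l - 1) * pi"
  then show "x = y" using gg_less_k[of x y Lam] gg_less_k[of y x Lam] by (cases x y rule: linorder_cases) auto
qed

definition kk :: "nat \<Rightarrow> real \<Rightarrow> real" where
  "kk l Lam = (THE k. k \<in> LW_interval L l \<and> gg Lam k = (2 * real l - 1) * pi)"

lemma kk_prop: "kk l Lam \<in> LW_interval L l" "gg Lam (kk l Lam) = (2 * real l - 1) * pi"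
proof -
  have "kk l Lam \<in> LW_interval L l \<and> gg Lam (kk l Lam) = (2 * real l - 1) * pi"
    unfolding kk_def by (rule theI'[OF kk_ex1])
  then show "kk l Lam \<in> LW_interval L l" "gg Lam (kk l Lam) = (2 * real l - 1) * pi" by blast+
qed

lemma kk_unique: "k \<in> LW_interval L l \<Longrightarrow> gg Lam k = (2 * real l - 1) * pi \<Longrightarrow> kk l Lam = k"
  unfolding kk_def by (intro the1_equality[OF kk_ex1] conjI)

lemma kk_strict: "(real l - 1) * (2*pi/real L) < kk l Lam" "kk l Lam < real l * (2*pi/real L)"
proof -
  have "(real l - 1) * (2*pi/real L) \<noteq> kk l Lam" using gg_left[where Lam=Lam and l=l] kk_prop(2)[where l=l and Lam=Lam] by auto
  then show "(real l - 1) * (2*pi/real L) < kk l Lam" using kk_prop(1)[where l=l and Lam=Lam] unfolding LW_interval_def by auto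
  have "real l * (2*pi/real L) \<noteq> kk l Lam" using gg_right[where Lam=Lam and l=l] kk_prop(2)[where l=l and Lam=Lam] by auto
  then show "kk l Lam < real l * (2*pi/real L)" using kk_prop(1)[where l=l and Lam=Lam] unfolding LW_interval_def by auto
qed

lemma kk_inj: "kk l Lam = kk l' Lam \<Longrightarrow> l = l'"
proof -
  assume a: "kk l Lam = kk l' Lam"
  have "(2 * real l - 1) * pi = (2 * real l' - 1) * pi"
    using kk_prop(2)[where l=l and Lam=Lam] kk_prop(2)[where l=l' and Lam=Lam] a by metis
  then show ?thesis by simp
qed

lemma kk_range: "1 \<le> l \<Longrightarrow> l \<le> L \<Longrightarrow> 0 < kk l Lam \<and> kk l Lam < 2 * pi"
proof -
  assume l: "1 \<le> l" "l \<le> L"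
  have "0 \<le> (real l - 1) * (2*pi/real L)" using l Lpos by simp
  moreover have "real l * (2*pi/real L) \<le> real L * (2*pi/real L)"
    using l Lpos by (intro mult_right_mono) auto
  moreover have "real L * (2*pi/real L) = 2 * pi" using Lpos by simp
  ultimately show ?thesis using kk_strict[where l=l and Lam=Lam] by linarith
qed

lemma sol_interval:
  assumes k: "k \<in> LW_interval L l" and m: "gg Lam k = (2 * of_int m + 1) * pi"
  shows "gg Lam k = (2 * real l - 1) * pi"
proof -
  have k1: "(real l - 1) * 2 * pi \<le> k * real L" and k2: "k * real L \<le> real l * 2 * pi"
  proof -
    have h1: "(real l - 1) * (2*pi/real L) \<le> k" and h2: "k \<le> real l * (2*pi/real L)" using k unfolding LW_interval_def by auto
    have "(real l - 1) * (2*pi/real L) * real L \<le> k * real L" by (rule mult_right_mono[OF h1]) simp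
    moreover have "k * real L \<le> real l * (2*pi/real L) * real L" by (rule mult_right_mono[OF h2]) simp
    ultimately show "(real l - 1) * 2 * pi \<le> k * real L" "k * real L \<le> real l * 2 * pi"
      using mulL[of "real l - 1"] mulL[of "real l"] by linarith+
  qed
  have c1: "k * real L - th (Lam - sin k) = 2 * (pi * of_int m) + pi" using m unfolding gg_def by (simp add: algebra_simps)
  have k1': "2 * (pi * real l) - 2 * pi \<le> k * real L" using k1 by (simp add: algebra_simps)
  have k2': "k * real L \<le> 2 * (pi * real l)" using k2 by (simp add: algebra_simps)
  have "pi * real_of_int m > pi * (real l - 2)"
    using c1 k1' th_bounds(2)[of "Lam - sin k"] by (simp add: algebra_simps)
  then have a: "real_of_int m > real l - 2" by simp
  have "pi * real_of_int m < pi * real l"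
    using c1 k2' th_bounds(1)[of "Lam - sin k"] by linarith
  then have b: "real_of_int m < real l" by simp
  have a': "m > int l - 2" using a by linarith
  have b': "m < int l" using b by linarith
  have "m = int l - 1" using a' b' by linarith
  then show ?thesis using m by simp
qed

lemma exists_interval:
  assumes "0 \<le> k" "k < 2 * pi"
  shows "nat \<lfloor>k * real L / (2*pi)\<rfloor> + 1 \<in> {1..L} \<and> k \<in> LW_interval L (nat \<lfloor>k * real L / (2*pi)\<rfloor> + 1)"
proof -
  define j where "j = \<lfloor>k * real L / (2*pi)\<rfloor>"
  have x0: "k * real L / (2*pi) \<ge> 0" using assms Lpos by simp
  have xl: "k * real L / (2*pi) < real L" using assms Lpos by (simp add: divide_less_eq)
  have j0: "j \<ge> 0" using x0 unfolding j_def by simp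
  have j1: "real_of_int j \<le> k * real L / (2*pi)" "k * real L / (2*pi) < real_of_int j + 1"
    unfolding j_def by linarith+
  have jL: "j < int L" using j1 xl by linarith
  have rj: "real (nat j) = real_of_int j" using j0 by simp
  have lo: "real_of_int j * (2*pi/real L) \<le> k"
    using j1(1) Lpos by (simp add: field_simps)
  have hi: "k \<le> (1 + real_of_int j) * (2*pi/real L)"
    using j1(2) Lpos by (simp add: field_simps)
  have e1: "real (nat j + 1) - 1 = real_of_int j" using rj by simp
  have e2: "real (nat j + 1) = 1 + real_of_int j" using rj by simp
  have "k \<in> LW_interval L (nat j + 1)"
    unfolding LW_interval_def e2 using lo hi by simp
  moreover have "nat j + 1 \<in> {1..L}" using jL j0 by simp
  ultimately show ?thesis unfolding j_def[symmetric] by blast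
qed

end


context LWl begin

lemma kk_less_Lam: "Lam1 < Lam2 \<Longrightarrow> kk l Lam1 < kk l Lam2"
proof (rule ccontr)
  assume a: "Lam1 < Lam2" and n: "\<not> kk l Lam1 < kk l Lam2"
  then have "kk l Lam2 \<le> kk l Lam1" by linarith
  then have "gg Lam2 (kk l Lam2) \<le> gg Lam2 (kk l Lam1)" by (rule gg_le_k)
  moreover have "gg Lam2 (kk l Lam1) < gg Lam1 (kk l Lam1)" using a by (rule gg_less_Lam)
  ultimately show False using kk_prop(2)[where l=l and Lam=Lam1] kk_prop(2)[where l=l and Lam=Lam2] by linarith
qed

definition Lf :: "nat \<Rightarrow> real \<Rightarrow> real" where
  "Lf l z = sin z + (U/4) * tan ((z * real L - (2 * real l - 1) * pi) / 2)"

lemma w_bounds: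
  assumes "(real l - 1) * (2*pi/real L) < z" "z < real l * (2*pi/real L)"
  shows "- (pi/2) < (z * real L - (2 * real l - 1) * pi) / 2" "(z * real L - (2 * real l - 1) * pi) / 2 < pi/2"
proof -
  have "(real l - 1) * (2*pi/real L) * real L < z * real L" using assms(1) Lpos by (rule mult_strict_right_mono)
  then have a: "(real l - 1) * 2 * pi < z * real L" unfolding mulL .
  have "z * real L < real l * (2*pi/real L) * real L" using assms(2) Lpos by (rule mult_strict_right_mono)
  then have b: "z * real L < real l * 2 * pi" unfolding mulL .
  show "- (pi/2) < (z * real L - (2 * real l - 1) * pi) / 2" using a by (simp add: algebra_simps)
  show "(z * real L - (2 * real l - 1) * pi) / 2 < pi/2" using b by (simp add: algebra_simps)
qed

lemma kk_Lf:
  assumes "(real l - 1) * (2*pi/real L) < z" "z < real l * (2*pi/real L)"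
  shows "kk l (Lf l z) = z"
proof (rule kk_unique)
  show "z \<in> LW_interval L l" using assms unfolding LW_interval_def by simp
  have "(Lf l z - sin z) / (U/4) = tan ((z * real L - (2 * real l - 1) * pi) / 2)"
    unfolding Lf_def using U by simp
  then have "th (Lf l z - sin z) = z * real L - (2 * real l - 1) * pi"
    unfolding th_def using arctan_tan[OF w_bounds[OF assms]] by simp
  then show "gg (Lf l z) z = (2 * real l - 1) * pi" unfolding gg_def by simp
qed

lemma Lf_kk: "Lf l (kk l Lam) = Lam"
proof -
  define z where "z = kk l Lam"
  have "z * real L - th (Lam - sin z) = (2 * real l - 1) * pi" using kk_prop(2)[where l=l and Lam=Lam] unfolding z_def gg_def .
  then have "arctan ((Lam - sin z) / (U/4)) = (z * real L - (2 * real l - 1) * pi) / 2" unfolding th_def by simp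
  then have "(Lam - sin z) / (U/4) = tan ((z * real L - (2 * real l - 1) * pi) / 2)"
    by (metis tan_arctan)
  then show ?thesis unfolding Lf_def z_def[symmetric] using U by (simp add: field_simps)
qed

lemma Lf_cont:
  assumes "(real l - 1) * (2*pi/real L) < z" "z < real l * (2*pi/real L)"
  shows "isCont (Lf l) z"
proof -
  have "cos ((z * real L - (2 * real l - 1) * pi) / 2) > 0"
    using w_bounds[OF assms] by (intro cos_gt_zero_pi) auto
  then show ?thesis unfolding Lf_def by (intro continuous_intros) auto
qed

lemma kk_cont: "isCont (kk l) Lam"
proof -
  define x where "x = kk l Lam"
  define a where "a = (real l - 1) * (2*pi/real L)"
  define b where "b = real l * (2*pi/real L)"
  have xa: "a < x" and xb: "x < b" unfolding x_def a_def b_def using kk_strict by auto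
  have "isCont (kk l) (Lf l x)"
  proof (rule isCont_inverse_function2[where a="(a + x)/2" and b="(x + b)/2" and f="Lf l" and g="kk l" and x=x])
    show "(a + x) / 2 < x" "x < (x + b) / 2" using xa xb by auto
    fix z assume "(a + x) / 2 \<le> z" "z \<le> (x + b) / 2"
    then have z: "a < z" "z < b" using xa xb by auto
    show "kk l (Lf l z) = z" using kk_Lf z unfolding a_def b_def by blast
    show "isCont (Lf l) z" using Lf_cont z unfolding a_def b_def by blast
  qed
  then show ?thesis unfolding x_def Lf_kk .
qed


definition Phi :: "nat set \<Rightarrow> real \<Rightarrow> real" where
  "Phi S Lam = real L * (\<Sum>l\<in>S. kk l Lam)"

lemma Phi_less:
  assumes "finite S" "S \<noteq> {}" "Lam1 < Lam2"
  shows "Phi S Lam1 < Phi S Lam2"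
proof -
  have "(\<Sum>l\<in>S. kk l Lam1) < (\<Sum>l\<in>S. kk l Lam2)"
    using assms by (intro sum_strict_mono kk_less_Lam) auto
  then show ?thesis unfolding Phi_def using Lpos by simp
qed

lemma Phi_cont: "isCont (Phi S) Lam"
  unfolding Phi_def by (intro continuous_intros kk_cont)

lemma kkL: "real L * kk l Lam = (2 * real l - 1) * pi + th (Lam - sin (kk l Lam))"
  using kk_prop(2)[where l=l and Lam=Lam] unfolding gg_def by (simp add: algebra_simps)

lemma Phi_expr: "Phi S Lam = (\<Sum>l\<in>S. (2 * real l - 1) * pi) + (\<Sum>l\<in>S. th (Lam - sin (kk l Lam)))"
  unfolding Phi_def sum_distrib_left kkL sum.distrib ..

lemma sumA: "finite S \<Longrightarrow> (\<Sum>l\<in>S. (2 * real l - 1) * pi) = (2 * real_of_int (\<Sum>l\<in>S. int l) - real (card S)) * pi"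
  by (simp add: sum_distrib_right[symmetric] sum_subtractf sum_distrib_left[symmetric] algebra_simps)

lemma Phi_bounds:
  assumes "finite S" "S \<noteq> {}"
  shows "2 * pi * (real_of_int (\<Sum>l\<in>S. int l) - real (card S)) < Phi S Lam"
        "Phi S Lam < 2 * pi * real_of_int (\<Sum>l\<in>S. int l)"
proof -
  have "(\<Sum>l\<in>S. - pi) < (\<Sum>l\<in>S. th (Lam - sin (kk l Lam)))"
    using assms th_bounds(1) by (intro sum_strict_mono) auto
  then have a: "- (real (card S) * pi) < (\<Sum>l\<in>S. th (Lam - sin (kk l Lam)))" by simp
  have "(\<Sum>l\<in>S. th (Lam - sin (kk l Lam))) < (\<Sum>l\<in>S. pi)"
    using assms th_bounds(2) by (intro sum_strict_mono) auto
  then have b: "(\<Sum>l\<in>S. th (Lam - sin (kk l Lam))) < real (card S) * pi" by simp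
  show "2 * pi * (real_of_int (\<Sum>l\<in>S. int l) - real (card S)) < Phi S Lam"
    unfolding Phi_expr sumA[OF assms(1)] using a by (simp add: algebra_simps)
  show "Phi S Lam < 2 * pi * real_of_int (\<Sum>l\<in>S. int l)"
    unfolding Phi_expr sumA[OF assms(1)] using b by (simp add: algebra_simps)
qed

lemma Phi_hi:
  assumes "finite S"
  shows "Phi S Lam \<ge> (\<Sum>l\<in>S. (2 * real l - 1) * pi) + real (card S) * th (Lam - 1)"
proof -
  have "(\<Sum>l\<in>S. th (Lam - 1)) \<le> (\<Sum>l\<in>S. th (Lam - sin (kk l Lam)))"
    by (intro sum_mono th_le) (simp add: sin_le_one)
  then show ?thesis unfolding Phi_expr by simp
qed

lemma Phi_lo:
  assumes "finite S"
  shows "Phi S Lam \<le> (\<Sum>l\<in>S. (2 * real l - 1) * pi) + real (card S) * th (Lam + 1)"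
proof -
  have "(\<Sum>l\<in>S. th (Lam - sin (kk l Lam))) \<le> (\<Sum>l\<in>S. th (Lam + 1))"
    by (intro sum_mono th_le) (smt (verit) sin_ge_minus_one)
  then show ?thesis unfolding Phi_expr by simp
qed

lemma Phi_hits:
  assumes S: "finite S" "S \<noteq> {}"
    and y: "2 * pi * (real_of_int (\<Sum>l\<in>S. int l) - real (card S)) < y" "y < 2 * pi * real_of_int (\<Sum>l\<in>S. int l)"
  shows "\<exists>Lam. Phi S Lam = y"
proof -
  define A where "A = (\<Sum>l\<in>S. (2 * real l - 1) * pi)"
  define N where "N = real (card S)"
  have N: "N > 0" unfolding N_def using S by (simp add: card_gt_0_iff)
  define v where "v = (y - A) / N"
  have "A - N * pi < y" "y < A + N * pi"
    using y unfolding A_def N_def sumA[OF S(1)] by (simp_all add: algebra_simps)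
  then have "- pi < v" "v < pi" unfolding v_def using N by (simp_all add: field_simps)
  then have v2: "- (pi/2) < v/2" "v/2 < pi/2" by simp_all
  define x0 where "x0 = (U/4) * tan (v/2)"
  have thx: "th x0 = v" unfolding th_def x0_def using U arctan_tan[OF v2] by simp
  have yv: "A + N * v = y" unfolding v_def using N by simp
  have "Phi S (x0 + 1) \<ge> y" using Phi_hi[OF S(1), of "x0 + 1"] thx yv unfolding A_def N_def by simp
  moreover have "Phi S (x0 - 1) \<le> y" using Phi_lo[OF S(1), of "x0 - 1"] thx yv unfolding A_def N_def by simp
  ultimately have "\<exists>x. x0 - 1 \<le> x \<and> x \<le> x0 + 1 \<and> Phi S x = y"
    by (intro IVT') (auto intro: continuous_at_imp_continuous_on Phi_cont)
  then show ?thesis by blast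
qed

definition Zs :: "nat set \<Rightarrow> real set" where
  "Zs S = {Lam. \<exists>n::int. Phi S Lam = 2 * pi * of_int n}"

lemma card_Zs:
  assumes S: "finite S" "S \<noteq> {}"
  shows "finite (Zs S) \<and> card (Zs S) = card S - 1"
proof -
  define si where "si = (\<Sum>l\<in>S. int l)"
  define T where "T = {si - int (card S) <..< si}"
  define f where "f = (\<lambda>Lam. Phi S Lam / (2 * pi))"
  have inj: "inj_on f (Zs S)"
  proof (rule inj_onI)
    fix x y assume "x \<in> Zs S" "y \<in> Zs S" "f x = f y"
    then have e: "Phi S x = Phi S y" unfolding f_def by simp
    show "x = y"
      using Phi_less[OF S, of x y] Phi_less[OF S, of y x] e by (cases x y rule: linorder_cases) auto
  qed
  have img: "f ` Zs S = of_int ` T"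
  proof
    show "f ` Zs S \<subseteq> of_int ` T"
    proof
      fix r assume "r \<in> f ` Zs S"
      then obtain Lam n where n: "Phi S Lam = 2 * pi * of_int n" and r: "r = f Lam" unfolding Zs_def by auto
      have rn: "r = of_int n" unfolding r f_def n by simp
      have "2 * pi * (real_of_int si - real (card S)) < 2 * pi * of_int n"
        using Phi_bounds(1)[OF S, of Lam] n unfolding si_def by simp
      then have "real_of_int si - real (card S) < of_int n" by simp
      then have n1: "si - int (card S) < n" by linarith
      have "2 * pi * of_int n < 2 * pi * real_of_int si"
        using Phi_bounds(2)[OF S, of Lam] n unfolding si_def by simp
      then have "real_of_int n < real_of_int si" by simp
      then have n2: "n < si" by linarith
      show "r \<in> of_int ` T" unfolding rn T_def using n1 n2 by auto
    qed
    show "of_int ` T \<subseteq> f ` Zs S"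
    proof
      fix r assume "r \<in> (of_int ` T :: real set)"
      then obtain n where n: "n \<in> T" and r: "r = of_int n" by auto
      have "real_of_int (si - int (card S)) < of_int n" "real_of_int n < of_int si"
        using n unfolding T_def by (simp_all only: of_int_less_iff greaterThanLessThan_iff)
      then have "2 * pi * (real_of_int si - real (card S)) < 2 * pi * of_int n"
        "2 * pi * of_int n < 2 * pi * real_of_int si" by simp_all
      then obtain Lam where L: "Phi S Lam = 2 * pi * of_int n" using Phi_hits[OF S] unfolding si_def by blast
      then have "Lam \<in> Zs S" unfolding Zs_def by blast
      moreover have "f Lam = r" unfolding f_def L r by simp
      ultimately show "r \<in> f ` Zs S" by blast
    qed
  qed
  have bij: "bij_betw f (Zs S) (of_int ` T)" using inj img unfolding bij_betw_def by blast
  have injT: "inj_on (of_int :: int \<Rightarrow> real) T" by (rule inj_onI) simp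
  have "finite (of_int ` T :: real set)" unfolding T_def by simp
  then have fin: "finite (Zs S)" using bij bij_betw_finite by blast
  have "card (Zs S) = card (of_int ` T :: real set)" using bij by (rule bij_betw_same_card)
  also have "\<dots> = card T" using injT by (rule card_image)
  also have "\<dots> = card S - 1" unfolding T_def by simp
  finally show ?thesis using fin by blast
qed


lemma prod_factor:
  assumes "finite K" "\<forall>k\<in>K. exp (\<i> * complex_of_real (k * real L)) = LW_factor U Lam k"
  shows "(\<Prod>k\<in>K. LW_factor U Lam k) = exp (\<i> * complex_of_real (real L * (\<Sum>k\<in>K. k)))"
proof -
  have "(\<Prod>k\<in>K. LW_factor U Lam k) = (\<Prod>k\<in>K. exp (\<i> * complex_of_real (k * real L)))"
    using assms(2) by (intro prod.cong) auto
  also have "\<dots> = exp (\<Sum>k\<in>K. \<i> * complex_of_real (k * real L))"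
    using assms(1) by (simp add: exp_sum)
  also have "(\<Sum>k\<in>K. \<i> * complex_of_real (k * real L)) = \<i> * complex_of_real (real L * (\<Sum>k\<in>K. k))"
    by (simp add: sum_distrib_left sum_distrib_right mult.commute)
  finally show ?thesis .
qed

lemma exp_i_eq_1: "exp (\<i> * complex_of_real x) = 1 \<longleftrightarrow> (\<exists>n::int. x = 2 * pi * of_int n)"
  by (simp add: exp_eq_1 mult_ac)

lemma kk_eq: "1 \<le> l \<Longrightarrow> exp (\<i> * complex_of_real (kk l Lam * real L)) = LW_factor U Lam (kk l Lam)"
proof -
  assume l: "1 \<le> l"
  have "gg Lam (kk l Lam) = (2 * of_int (int l - 1) + 1) * pi"
    using kk_prop(2)[where l=l and Lam=Lam] l by (simp add: of_nat_diff)
  then show ?thesis unfolding eq_iff by blast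
qed

lemma inj_kk: "inj (\<lambda>l. kk l Lam)"
  by (rule injI) (rule kk_inj)

lemma sols_in_char:
  assumes S: "S \<subseteq> {1..L}" "card S = N" "N > 0"
  shows "LW_solutions_in L N U S = (\<lambda>Lam. ((\<lambda>l. kk l Lam) ` S, Lam)) ` Zs S"
proof
  have finS: "finite S" using S(1) finite_subset by blast
  show "(\<lambda>Lam. ((\<lambda>l. kk l Lam) ` S, Lam)) ` Zs S \<subseteq> LW_solutions_in L N U S"
  proof
    fix p assume "p \<in> (\<lambda>Lam. ((\<lambda>l. kk l Lam) ` S, Lam)) ` Zs S"
    then obtain Lam where Z: "Lam \<in> Zs S" and p: "p = ((\<lambda>l. kk l Lam) ` S, Lam)" by blast
    define K where "K = (\<lambda>l. kk l Lam) ` S"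
    have inj: "inj_on (\<lambda>l. kk l Lam) S" using inj_kk by (rule inj_on_subset) simp
    have finK: "finite K" unfolding K_def using finS by simp
    have cardK: "card K = N" unfolding K_def using card_image[OF inj] S by simp
    have sub: "K \<subseteq> {0..<2*pi}" unfolding K_def using kk_range S(1) by (auto simp: less_imp_le)
    have eqs: "\<forall>k\<in>K. exp (\<i> * complex_of_real (k * real L)) = LW_factor U Lam k"
      unfolding K_def using kk_eq S(1) by auto
    obtain n :: int where n: "Phi S Lam = 2 * pi * of_int n" using Z unfolding Zs_def by blast
    have sK: "(\<Sum>k\<in>K. k) = (\<Sum>l\<in>S. kk l Lam)" unfolding K_def using sum.reindex[OF inj, of "\<lambda>x. x"] by simp
    have prod1: "(\<Prod>k\<in>K. LW_factor U Lam k) = 1"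
      unfolding prod_factor[OF finK eqs] sK using n unfolding Phi_def exp_i_eq_1 by blast
    have sol: "(K, Lam) \<in> LW_solutions L N U"
      unfolding LW_solutions_def using finK cardK sub eqs prod1 by blast
    define f where "f = the_inv_into S (\<lambda>l. kk l Lam)"
    have "bij_betw (\<lambda>l. kk l Lam) S K" unfolding K_def using inj by (rule inj_on_imp_bij_betw)
    then have bf: "bij_betw f K S" unfolding f_def by (rule bij_betw_the_inv_into)
    have "\<forall>k\<in>K. k \<in> LW_interval L (f k)"
    proof
      fix k assume "k \<in> K"
      then obtain l where l: "l \<in> S" "k = kk l Lam" unfolding K_def by blast
      have "f k = l" unfolding f_def l(2) using the_inv_into_f_f[OF inj l(1)] .
      then show "k \<in> LW_interval L (f k)" using kk_prop(1) l(2) by simp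
    qed
    then show "p \<in> LW_solutions_in L N U S"
      unfolding p K_def[symmetric] LW_solutions_in_def using sol bf by blast
  qed
  show "LW_solutions_in L N U S \<subseteq> (\<lambda>Lam. ((\<lambda>l. kk l Lam) ` S, Lam)) ` Zs S"
  proof
    fix p assume p: "p \<in> LW_solutions_in L N U S"
    obtain K Lam where pK: "p = (K, Lam)" by (cases p)
    have sol: "(K, Lam) \<in> LW_solutions L N U" and ex: "\<exists>f. bij_betw f K S \<and> (\<forall>k\<in>K. k \<in> LW_interval L (f k))"
      using p unfolding pK LW_solutions_in_def by auto
    then obtain f where bf: "bij_betw f K S" and fI: "\<forall>k\<in>K. k \<in> LW_interval L (f k)" by blast
    have finK: "finite K" and eqs: "\<forall>k\<in>K. exp (\<i> * complex_of_real (k * real L)) = LW_factor U Lam k"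
      and prod1: "(\<Prod>k\<in>K. LW_factor U Lam k) = 1"
      using sol unfolding LW_solutions_def by auto
    have kf: "kk (f k) Lam = k" if k: "k \<in> K" for k
    proof -
      obtain m :: int where "gg Lam k = (2 * of_int m + 1) * pi" using eqs k eq_iff by blast
      then have "gg Lam k = (2 * real (f k) - 1) * pi" using sol_interval fI k by blast
      then show ?thesis using kk_unique fI k by blast
    qed
    have KS: "K = (\<lambda>l. kk l Lam) ` S"
    proof
      show "K \<subseteq> (\<lambda>l. kk l Lam) ` S"
      proof
        fix k assume k: "k \<in> K"
        then have "f k \<in> S" using bf bij_betwE by blast
        then show "k \<in> (\<lambda>l. kk l Lam) ` S" using kf[OF k] by force
      qed
      show "(\<lambda>l. kk l Lam) ` S \<subseteq> K"
      proof
        fix x assume "x \<in> (\<lambda>l. kk l Lam) ` S"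
        then obtain l where l: "l \<in> S" "x = kk l Lam" by blast
        then obtain k where k: "k \<in> K" "f k = l" using bf unfolding bij_betw_def by blast
        then show "x \<in> K" using kf[OF k(1)] l(2) by simp
      qed
    qed
    have inj: "inj_on (\<lambda>l. kk l Lam) S" using inj_kk by (rule inj_on_subset) simp
    have sK: "(\<Sum>k\<in>K. k) = (\<Sum>l\<in>S. kk l Lam)" unfolding KS using sum.reindex[OF inj, of "\<lambda>x. x"] by simp
    have "exp (\<i> * complex_of_real (real L * (\<Sum>k\<in>K. k))) = 1" using prod1 prod_factor[OF finK eqs] by simp
    then have "Lam \<in> Zs S" unfolding exp_i_eq_1 sK Zs_def Phi_def by blast
    then show "p \<in> (\<lambda>Lam. ((\<lambda>l. kk l Lam) ` S, Lam)) ` Zs S" unfolding pK KS by blast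
  qed
qed

lemma sols_in_card:
  assumes S: "S \<subseteq> {1..L}" "card S = N" "N > 0"
  shows "finite (LW_solutions_in L N U S) \<and> card (LW_solutions_in L N U S) = N - 1 \<and>
         snd ` LW_solutions_in L N U S = Zs S"
proof -
  have finS: "finite S" using S(1) finite_subset by blast
  have ne: "S \<noteq> {}" using S by auto
  have inj: "inj_on (\<lambda>Lam. ((\<lambda>l. kk l Lam) ` S, Lam)) (Zs S)" by (rule inj_onI) simp
  show ?thesis unfolding sols_in_char[OF S] using card_Zs[OF finS ne] card_image[OF inj] S(2)
    by (simp add: image_image)
qed

lemma sols_union:
  assumes N: "N > 0"
  shows "LW_solutions L N U = (\<Union>S\<in>{S. S \<subseteq> {1..L} \<and> card S = N}. LW_solutions_in L N U S)"
proof
  show "(\<Union>S\<in>{S. S \<subseteq> {1..L} \<and> card S = N}. LW_solutions_in L N U S) \<subseteq> LW_solutions L N U"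
    unfolding LW_solutions_in_def by auto
  show "LW_solutions L N U \<subseteq> (\<Union>S\<in>{S. S \<subseteq> {1..L} \<and> card S = N}. LW_solutions_in L N U S)"
  proof
    fix p assume p: "p \<in> LW_solutions L N U"
    obtain K Lam where pK: "p = (K, Lam)" by (cases p)
    have finK: "finite K" and cardK: "card K = N" and sub: "K \<subseteq> {0..<2*pi}"
      and eqs: "\<forall>k\<in>K. exp (\<i> * complex_of_real (k * real L)) = LW_factor U Lam k"
      using p unfolding pK LW_solutions_def by auto
    define g where "g = (\<lambda>k::real. nat \<lfloor>k * real L / (2*pi)\<rfloor> + 1)"
    have gI: "g k \<in> {1..L} \<and> k \<in> LW_interval L (g k)" if "k \<in> K" for k
      unfolding g_def using exists_interval sub that by auto
    have kg: "kk (g k) Lam = k" if k: "k \<in> K" for k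
    proof -
      obtain m :: int where "gg Lam k = (2 * of_int m + 1) * pi" using eqs k eq_iff by blast
      then have "gg Lam k = (2 * real (g k) - 1) * pi" using sol_interval gI k by blast
      then show ?thesis using kk_unique gI k by blast
    qed
    have inj: "inj_on g K"
    proof (rule inj_onI)
      fix x y assume "x \<in> K" "y \<in> K" "g x = g y"
      then show "x = y" using kg by metis
    qed
    define S where "S = g ` K"
    have "bij_betw g K S" unfolding S_def using inj by (rule inj_on_imp_bij_betw)
    moreover have "\<forall>k\<in>K. k \<in> LW_interval L (g k)" using gI by blast
    ultimately have "p \<in> LW_solutions_in L N U S" using p unfolding pK LW_solutions_in_def by blast
    moreover have "S \<subseteq> {1..L}" unfolding S_def using gI by blast
    moreover have "card S = N" unfolding S_def using card_image[OF inj] cardK by simp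
    ultimately show "p \<in> (\<Union>S\<in>{S. S \<subseteq> {1..L} \<and> card S = N}. LW_solutions_in L N U S)" by blast
  qed
qed

lemma sols_disjoint:
  assumes "S1 \<subseteq> {1..L}" "card S1 = N" "S2 \<subseteq> {1..L}" "card S2 = N" "N > 0" "S1 \<noteq> S2"
  shows "LW_solutions_in L N U S1 \<inter> LW_solutions_in L N U S2 = {}"
proof (rule ccontr)
  assume "LW_solutions_in L N U S1 \<inter> LW_solutions_in L N U S2 \<noteq> {}"
  then obtain p where "p \<in> LW_solutions_in L N U S1" "p \<in> LW_solutions_in L N U S2" by blast
  then obtain Lam1 Lam2 where p1: "p = ((\<lambda>l. kk l Lam1) ` S1, Lam1)" and p2: "p = ((\<lambda>l. kk l Lam2) ` S2, Lam2)"
    unfolding sols_in_char[OF assms(1,2,5)] sols_in_char[OF assms(3,4,5)] by blast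
  have "((\<lambda>l. kk l Lam1) ` S1, Lam1) = ((\<lambda>l. kk l Lam2) ` S2, Lam2)" using p1 p2 by metis
  then have e: "(\<lambda>l. kk l Lam1) ` S1 = (\<lambda>l. kk l Lam2) ` S2" "Lam1 = Lam2" unfolding prod.inject by blast+
  have "(\<lambda>l. kk l Lam1) ` S1 = (\<lambda>l. kk l Lam1) ` S2" using e(1)[unfolded e(2)[symmetric]] .
  then have "S1 = S2" using inj_kk[of Lam1] by (simp add: inj_image_eq_iff)
  then show False using assms(6) by blast
qed

end

theorem mainTheorem2:
  fixes L N :: nat and U :: real
  assumes "0 < N" and "N \<le> L" and "0 < U" and "real L > 8 / U"
  shows "finite (LW_solutions L N U) \<and>
         card (LW_solutions L N U) = (L choose N) * (N - 1) \<and>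
         (\<forall>S. S \<subseteq> {1..L} \<and> card S = N \<longrightarrow>
              finite (LW_solutions_in L N U S) \<and>
              card (LW_solutions_in L N U S) = N - 1 \<and>
              card (snd ` LW_solutions_in L N U S) = N - 1)"
proof -
  interpret LWl L U using assms(3,4) by unfold_locales
  define SS where "SS = {S. S \<subseteq> {1..L} \<and> card S = N}"
  have per: "finite (LW_solutions_in L N U S) \<and> card (LW_solutions_in L N U S) = N - 1 \<and>
              card (snd ` LW_solutions_in L N U S) = N - 1" if "S \<subseteq> {1..L}" "card S = N" for S
  proof -
    have fS: "finite S" using that finite_subset by blast
    have ne: "S \<noteq> {}" using that assms(1) by auto
    show ?thesis using sols_in_card[OF that assms(1)] card_Zs[OF fS ne] that by simp
  qed
  have finSS: "finite SS" unfolding SS_def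
    by (rule finite_subset[of _ "Pow {1..L}"]) auto
  have cardSS: "card SS = L choose N" unfolding SS_def using n_subsets[of "{1..L::nat}" N] by simp
  have U: "LW_solutions L N U = (\<Union>S\<in>SS. LW_solutions_in L N U S)"
    unfolding SS_def by (rule sols_union[OF assms(1)])
  have fin: "finite (LW_solutions L N U)" unfolding U using finSS per unfolding SS_def by blast
  have "card (LW_solutions L N U) = (\<Sum>S\<in>SS. card (LW_solutions_in L N U S))"
    unfolding U
    by (rule card_UN_disjoint[OF finSS]) (use per sols_disjoint assms(1) in \<open>auto simp: SS_def\<close>)
  also have "\<dots> = (\<Sum>S\<in>SS. N - 1)" using per by (intro sum.cong) (auto simp: SS_def)
  also have "\<dots> = (L choose N) * (N - 1)" using cardSS by simp
  finally show ?thesis using fin per by blast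
qed

end
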